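(* For any integer $m\ge2$ and any $0\le\rho\le\sqrt{\frac{1}{3\sqrt m}}$, let $\Delta_\rho:\mathcal{M}_m\to\mathcal{M}_m$ be the noise operator. Then for every integer $n\ge1$, the normalized $2$-to-$4$ norm satisfies $\|\Delta_\rho^{\otimes n}\|'_{2\to4}\le1$.
   Context: $\Delta_\rho(P)=\rho P+\frac{1-\rho}{m}(\mathrm{Tr}P)\mathrm{id}_m$ for $P\in\mathcal{M}_m$ (complex $m\times m$ matrices). For $M\in\mathcal{M}_k$ with singular values $s_1,\ldots,s_k$, the normalized $p$-norm is $\|M\|'_p=(\frac1k\sum_i s_i^p)^{1/p}$. For a linear map $L:\mathcal{M}_k\to\mathcal{M}_k$, $\|L\|'_{p\to q}=\sup_{M\ne0}\|L(M)\|'_q/\|M\|'_p$. Here $k=m^n$. *)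

theory Defs
  imports "Jordan_Normal_Form.Char_Poly" "Jordan_Normal_Form.Schur_Decomposition"
begin

definition mat_tr :: "complex mat \<Rightarrow> complex" where
  "mat_tr A = (\<Sum>i<dim_row A. A $$ (i,i))"

definition noise_op :: "nat \<Rightarrow> real \<Rightarrow> complex mat \<Rightarrow> complex mat" where
  "noise_op m \<rho> P = complex_of_real \<rho> \<cdot>\<^sub>m P
      + (complex_of_real ((1 - \<rho>) / real m) * mat_tr P) \<cdot>\<^sub>m (1\<^sub>m m)"

(* j-th base-m digit of i: identifies {0..<m^n} with {0..<m}^n *)
definition digit :: "nat \<Rightarrow> nat \<Rightarrow> nat \<Rightarrow> nat" where
  "digit m j i = (i div m ^ j) mod m"

definition unit_mat :: "nat \<Rightarrow> nat \<Rightarrow> nat \<Rightarrow> complex mat" where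
  "unit_mat m a b = mat m m (\<lambda>(c,d). if c = a \<and> d = b then 1 else 0)"

(* n-fold tensor power L^{\<otimes>n} of a linear map L on M_m, acting on M_{m^n}
   (M_{m^n} = M_m^{\<otimes>n} via base-m digits); defined by linear extension of
   L^{\<otimes>n}(E_{a_1 b_1} \<otimes> ... \<otimes> E_{a_n b_n}) = L(E_{a_1 b_1}) \<otimes> ... \<otimes> L(E_{a_n b_n}) *)
definition tensor_pow_map ::
  "nat \<Rightarrow> nat \<Rightarrow> (complex mat \<Rightarrow> complex mat) \<Rightarrow> complex mat \<Rightarrow> complex mat" where
  "tensor_pow_map m n L M = mat (m ^ n) (m ^ n) (\<lambda>(c,d).
      \<Sum>a<m ^ n. \<Sum>b<m ^ n.
        (\<Prod>j<n. L (unit_mat m (digit m j a) (digit m j b)) $$ (digit m j c, digit m j d))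
        * M $$ (a,b))"

definition sing_vals :: "complex mat \<Rightarrow> real multiset" where
  "sing_vals M = image_mset (\<lambda>z. sqrt (Re z)) (proots (char_poly (mat_adjoint M * M)))"

definition norm_p' :: "real \<Rightarrow> complex mat \<Rightarrow> real" where
  "norm_p' p M = ((1 / real (dim_row M)) * sum_mset (image_mset (\<lambda>s. s powr p) (sing_vals M)))
                   powr (1 / p)"

definition op_norm_pq :: "nat \<Rightarrow> real \<Rightarrow> real \<Rightarrow> (complex mat \<Rightarrow> complex mat) \<Rightarrow> real" where
  "op_norm_pq k p q L = Sup {norm_p' q (L M) / norm_p' p M | M.
        M \<in> carrier_mat k k \<and> M \<noteq> 0\<^sub>m k k}"

end

theory Submission
  imports Defs "HOL-Analysis.L2_Norm" "HOL-Analysis.Convex"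
begin

type_synonym 'i cm = "'i \<Rightarrow> 'i \<Rightarrow> complex"

definition cmul :: "'i set \<Rightarrow> 'i cm \<Rightarrow> 'i cm \<Rightarrow> 'i cm" where
  "cmul I A B = (\<lambda>i j. \<Sum>l\<in>I. A i l * B l j)"
definition cadj :: "'i cm \<Rightarrow> 'i cm" where "cadj A = (\<lambda>i j. cnj (A j i))"
definition ctr :: "'i set \<Rightarrow> 'i cm \<Rightarrow> complex" where "ctr I A = (\<Sum>i\<in>I. A i i)"
definition cfr :: "'i set \<Rightarrow> 'i cm \<Rightarrow> real" where
  "cfr I A = (\<Sum>i\<in>I. \<Sum>j\<in>I. (cmod (A i j))^2)"
definition cip :: "'i set \<Rightarrow> 'i cm \<Rightarrow> 'i cm \<Rightarrow> complex" where
  "cip I A B = (\<Sum>i\<in>I. \<Sum>j\<in>I. cnj (A i j) * B i j)"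
definition cg4 :: "'i set \<Rightarrow> 'i cm \<Rightarrow> real" where "cg4 I A = cfr I (cmul I (cadj A) A)"

lemma cadj_cadj[simp]: "cadj (cadj A) = A" by (simp add: cadj_def)

lemma cmul_assoc: "cmul I (cmul I A B) C = cmul I A (cmul I B C)"
  unfolding cmul_def
  by (auto simp: sum_distrib_left sum_distrib_right mult.assoc intro!: ext sum.swap)

lemma cadj_cmul: "cadj (cmul I A B) = cmul I (cadj B) (cadj A)"
  unfolding cmul_def cadj_def by (auto simp: mult.commute intro!: ext)

lemma ctr_comm: "ctr I (cmul I A B) = ctr I (cmul I B A)"
  unfolding cmul_def ctr_def by (subst sum.swap) (simp add: mult.commute)

lemma ctr_cip: "ctr I (cmul I (cadj A) B) = cip I A B"
  unfolding cmul_def ctr_def cip_def cadj_def by (subst sum.swap) simp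

lemma cfr_cip: "complex_of_real (cfr I A) = cip I A A"
  unfolding cfr_def cip_def
  by (simp only: of_real_sum complex_norm_square) (simp add: mult.commute)

lemma cfr_ctr: "complex_of_real (cfr I A) = ctr I (cmul I (cadj A) A)"
  by (simp add: ctr_cip cfr_cip)

lemma cfr_nonneg[simp]: "0 \<le> cfr I A"
  unfolding cfr_def by (intro sum_nonneg) auto

lemma cg4_nonneg[simp]: "0 \<le> cg4 I A"
  unfolding cg4_def by simp

lemma double_cs:
  fixes f g :: "'a \<Rightarrow> 'a \<Rightarrow> real"
  assumes "finite I"
  shows "(\<Sum>i\<in>I. \<Sum>j\<in>I. \<bar>f i j\<bar> * \<bar>g i j\<bar>) \<le> sqrt (\<Sum>i\<in>I. \<Sum>j\<in>I. (f i j)^2) * sqrt (\<Sum>i\<in>I. \<Sum>j\<in>I. (g i j)^2)"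
proof -
  have "(\<Sum>i\<in>I. \<Sum>j\<in>I. \<bar>f i j\<bar> * \<bar>g i j\<bar>) = (\<Sum>x\<in>I\<times>I. \<bar>case_prod f x\<bar> * \<bar>case_prod g x\<bar>)"
    unfolding sum.cartesian_product by (intro sum.cong) auto
  also have "\<dots> \<le> L2_set (case_prod f) (I\<times>I) * L2_set (case_prod g) (I\<times>I)"
    by (rule L2_set_mult_ineq)
  also have "\<dots> = sqrt (\<Sum>i\<in>I. \<Sum>j\<in>I. (f i j)^2) * sqrt (\<Sum>i\<in>I. \<Sum>j\<in>I. (g i j)^2)"
    unfolding L2_set_def by (simp add: sum.cartesian_product case_prod_beta)
  finally show ?thesis .
qed

lemma cip_cs: "finite I \<Longrightarrow> cmod (cip I A B) \<le> sqrt (cfr I A) * sqrt (cfr I B)"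
proof -
  assume fin: "finite I"
  have "cmod (cip I A B) \<le> (\<Sum>i\<in>I. \<Sum>j\<in>I. cmod (cnj (A i j) * B i j))"
    unfolding cip_def by (rule order_trans[OF norm_sum sum_mono]) (rule norm_sum)
  also have "\<dots> = (\<Sum>i\<in>I. \<Sum>j\<in>I. \<bar>cmod (A i j)\<bar> * \<bar>cmod (B i j)\<bar>)"
    by (simp add: norm_mult)
  also have "\<dots> \<le> sqrt (cfr I A) * sqrt (cfr I B)"
    unfolding cfr_def using double_cs[OF fin, of "\<lambda>i j. cmod (A i j)" "\<lambda>i j. cmod (B i j)"] by simp
  finally show ?thesis .
qed

lemma cadj_herm: "cadj (cmul I (cadj A) A) = cmul I (cadj A) A"
  by (simp add: cadj_cmul)

lemma of_real_inj_eq: "complex_of_real a = complex_of_real b \<Longrightarrow> a = b" by simp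

lemma cg4_ctr: "complex_of_real (cg4 I A) = ctr I (cmul I (cmul I (cadj A) A) (cmul I (cadj A) A))"
  unfolding cg4_def cfr_ctr by (simp add: cadj_herm)

lemma cg4_cadj: "cg4 I (cadj A) = cg4 I A"
proof -
  have "complex_of_real (cg4 I (cadj A)) = ctr I (cmul I (cmul I A (cadj A)) (cmul I A (cadj A)))"
    using cg4_ctr[of I "cadj A"] by simp
  also have "\<dots> = ctr I (cmul I A (cmul I (cadj A) (cmul I A (cadj A))))"
    by (simp add: cmul_assoc)
  also have "\<dots> = ctr I (cmul I (cmul I (cadj A) (cmul I A (cadj A))) A)"
    by (rule ctr_comm)
  also have "\<dots> = ctr I (cmul I (cmul I (cadj A) A) (cmul I (cadj A) A))"
    by (simp add: cmul_assoc)
  also have "\<dots> = complex_of_real (cg4 I A)" using cg4_ctr[of I A] by simp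
  finally show ?thesis by simp
qed

lemma cfr_cmul_le: assumes "finite I"
  shows "cfr I (cmul I U V) \<le> sqrt (cg4 I U) * sqrt (cg4 I V)"
proof -
  have "complex_of_real (cfr I (cmul I U V)) = ctr I (cmul I (cmul I (cadj V) (cadj U)) (cmul I U V))"
    by (simp add: cfr_ctr cadj_cmul)
  also have "\<dots> = ctr I (cmul I (cadj V) (cmul I (cadj U) (cmul I U V)))"
    by (simp add: cmul_assoc)
  also have "\<dots> = ctr I (cmul I (cmul I (cadj U) (cmul I U V)) (cadj V))"
    by (rule ctr_comm)
  also have "\<dots> = ctr I (cmul I (cadj (cmul I (cadj U) U)) (cmul I V (cadj V)))"
    by (simp add: cmul_assoc cadj_herm)
  also have "\<dots> = cip I (cmul I (cadj U) U) (cmul I V (cadj V))"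
    by (rule ctr_cip)
  finally have eq: "complex_of_real (cfr I (cmul I U V)) = cip I (cmul I (cadj U) U) (cmul I V (cadj V))" .
  have "cfr I (cmul I U V) = cmod (complex_of_real (cfr I (cmul I U V)))" by simp
  also have "\<dots> \<le> sqrt (cfr I (cmul I (cadj U) U)) * sqrt (cfr I (cmul I V (cadj V)))"
    unfolding eq by (rule cip_cs[OF assms])
  also have "\<dots> = sqrt (cg4 I U) * sqrt (cg4 I V)"
    using cg4_cadj[of I V] unfolding cg4_def by simp
  finally show ?thesis .
qed

lemma sqrt_cfr_eq_L2: "sqrt (cfr I A) = L2_set (\<lambda>x. cmod (A (fst x) (snd x))) (I\<times>I)"
  unfolding cfr_def L2_set_def by (simp add: sum.cartesian_product case_prod_beta)

lemma sqrt_cfr_add: "sqrt (cfr I (\<lambda>i j. A i j + B i j)) \<le> sqrt (cfr I A) + sqrt (cfr I B)"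
proof -
  have "sqrt (cfr I (\<lambda>i j. A i j + B i j)) \<le>
     L2_set (\<lambda>x. cmod (A (fst x) (snd x)) + cmod (B (fst x) (snd x))) (I\<times>I)"
    unfolding sqrt_cfr_eq_L2 by (rule L2_set_mono) (auto intro: norm_triangle_ineq)
  also have "\<dots> \<le> sqrt (cfr I A) + sqrt (cfr I B)"
    unfolding sqrt_cfr_eq_L2 by (rule L2_set_triangle_ineq)
  finally show ?thesis .
qed

lemma cfr_zero[simp]: "cfr I (\<lambda>i j. 0) = 0" by (simp add: cfr_def)

lemma cfr_cong: "(\<And>i j. i \<in> I \<Longrightarrow> j \<in> I \<Longrightarrow> A i j = B i j) \<Longrightarrow> cfr I A = cfr I B"
  unfolding cfr_def by (intro sum.cong refl) auto

lemma sqrt_cfr_sum: "finite E \<Longrightarrow> sqrt (cfr I (\<lambda>i j. \<Sum>e\<in>E. W e i j)) \<le> (\<Sum>e\<in>E. sqrt (cfr I (W e)))"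
proof (induction E rule: finite_induct)
  case empty then show ?case by simp
next
  case (insert x F)
  have "sqrt (cfr I (\<lambda>i j. \<Sum>e\<in>insert x F. W e i j)) = sqrt (cfr I (\<lambda>i j. W x i j + (\<Sum>e\<in>F. W e i j)))"
    using insert by simp
  also have "\<dots> \<le> sqrt (cfr I (W x)) + sqrt (cfr I (\<lambda>i j. \<Sum>e\<in>F. W e i j))"
    using sqrt_cfr_add[of I "W x" "\<lambda>i j. \<Sum>e\<in>F. W e i j"] by simp
  also have "\<dots> \<le> sqrt (cfr I (W x)) + (\<Sum>e\<in>F. sqrt (cfr I (W e)))" using insert by simp
  finally show ?case using insert by simp
qed

lemma cmod_sq3: "(cmod (p + q + r))^2 = (cmod p)^2 + (cmod q)^2 + (cmod r)^2
   + 2 * Re (cnj p * q) + 2 * Re (cnj p * r) + 2 * Re (cnj q * r)"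
  by (simp only: cmod_power2) (simp add: power2_eq_square algebra_simps)

lemma cfr_expand3: "cfr I (\<lambda>i j. P i j + Q i j + R i j) = cfr I P + cfr I Q + cfr I R
   + 2 * Re (cip I P Q) + 2 * Re (cip I P R) + 2 * Re (cip I Q R)"
  unfolding cfr_def cip_def cmod_sq3 by (simp add: sum.distrib sum_distrib_left Re_sum)

lemma cfr_scale: "cfr I (\<lambda>i j. c * A i j) = (cmod c)^2 * cfr I A"
  unfolding cfr_def by (simp add: norm_mult power_mult_distrib sum_distrib_left)

lemma cip_scale: "cip I A (\<lambda>i j. c * B i j) = c * cip I A B"
  unfolding cip_def by (simp add: sum_distrib_left algebra_simps)

lemma cip_scale1: "cip I (\<lambda>i j. c * A i j) B = cnj c * cip I A B"
  unfolding cip_def by (simp add: sum_distrib_left algebra_simps)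

lemma cmul_expand: "cmul I (cadj (\<lambda>i j. X i j + complex_of_real r * Y i j)) (\<lambda>i j. X i j + complex_of_real r * Y i j)
  = (\<lambda>i j. cmul I (cadj X) X i j + complex_of_real r * (cmul I (cadj X) Y i j + cmul I (cadj Y) X i j)
       + complex_of_real (r^2) * cmul I (cadj Y) Y i j)"
  unfolding cmul_def cadj_def
  by (auto intro!: ext simp: sum.distrib sum_distrib_left algebra_simps power2_eq_square)

lemma cip_add2: "cip I A (\<lambda>i j. B i j + C i j) = cip I A B + cip I A C"
  unfolding cip_def by (simp add: sum.distrib algebra_simps)

definition bk :: "nat set \<Rightarrow> nat set \<Rightarrow> (nat \<Rightarrow> nat \<Rightarrow> nat cm) \<Rightarrow> (nat \<times> nat) cm" where
  "bk A S W = (\<lambda>x y. if fst x \<in> A \<and> fst y \<in> A \<and> snd x \<in> S \<and> snd y \<in> S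
      then W (fst x) (fst y) (snd x) (snd y) else 0)"

definition bd :: "nat set \<Rightarrow> nat set \<Rightarrow> nat cm \<Rightarrow> (nat \<times> nat) cm" where
  "bd A S D = bk A S (\<lambda>a b. if a = b then D else (\<lambda>_ _. 0))"

lemma bk_cong: "(\<And>a b c d. a \<in> A \<Longrightarrow> b \<in> A \<Longrightarrow> c \<in> S \<Longrightarrow> d \<in> S \<Longrightarrow> W a b c d = W' a b c d)
   \<Longrightarrow> bk A S W = bk A S W'"
  unfolding bk_def by (auto intro!: ext)

lemma bk_mm: "cmul (A \<times> S) (bk A S V) (bk A S W) =
   bk A S (\<lambda>a b c d. \<Sum>e\<in>A. cmul S (V a e) (W e b) c d)"
proof (intro ext)
  fix x y :: "nat \<times> nat"
  show "cmul (A \<times> S) (bk A S V) (bk A S W) x y = bk A S (\<lambda>a b c d. \<Sum>e\<in>A. cmul S (V a e) (W e b) c d) x y"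
    unfolding cmul_def bk_def sum.cartesian_product'
    by (auto intro!: sum.cong)
qed

lemma bk_cadj: "cadj (bk A S W) = bk A S (\<lambda>a b. cadj (W b a))"
  unfolding cadj_def bk_def by (auto intro!: ext)

lemma cfr_bk: "cfr (A \<times> S) (bk A S W) = (\<Sum>a\<in>A. \<Sum>b\<in>A. cfr S (W a b))"
proof -
  have "cfr (A \<times> S) (bk A S W) = (\<Sum>a\<in>A. \<Sum>c\<in>S. \<Sum>b\<in>A. \<Sum>d\<in>S. (cmod (W a b c d))^2)"
    unfolding cfr_def bk_def sum.cartesian_product' by (simp cong: sum.cong_simp)
  also have "\<dots> = (\<Sum>a\<in>A. \<Sum>b\<in>A. \<Sum>c\<in>S. \<Sum>d\<in>S. (cmod (W a b c d))^2)"
    by (rule sum.cong[OF refl]) (rule sum.swap)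
  finally show ?thesis unfolding cfr_def .
qed

lemma ctr_bk: "ctr (A \<times> S) (bk A S W) = (\<Sum>a\<in>A. ctr S (W a a))"
  unfolding ctr_def bk_def sum.cartesian_product' by (auto intro!: sum.cong)

lemma bd_cadj: "cadj (bd A S D) = bd A S (cadj D)"
  unfolding bd_def bk_cadj by (rule bk_cong) (auto simp: cadj_def)

lemma cmul_zero_left[simp]: "cmul S (\<lambda>_ _. 0) B = (\<lambda>_ _. 0)"
  unfolding cmul_def by simp
lemma cmul_zero_right[simp]: "cmul S B (\<lambda>_ _. 0) = (\<lambda>_ _. 0)"
  unfolding cmul_def by simp

lemma cmul_bd_bk: "finite A \<Longrightarrow> cmul (A \<times> S) (bd A S D) (bk A S W) = bk A S (\<lambda>a b. cmul S D (W a b))"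
  unfolding bd_def bk_mm
  by (rule bk_cong) (simp add: if_distrib[where f="\<lambda>M. cmul S M _"] if_distrib[where f="\<lambda>M. M _ _"] cong: if_cong)

lemma cmul_bk_bd: "finite A \<Longrightarrow> cmul (A \<times> S) (bk A S W) (bd A S D) = bk A S (\<lambda>a b. cmul S (W a b) D)"
  unfolding bd_def bk_mm
  by (rule bk_cong) (simp add: if_distrib[where f="\<lambda>M. cmul S _ M"] if_distrib[where f="\<lambda>M. M _ _"] cong: if_cong)

lemma cmul_bd_bd: "finite A \<Longrightarrow> cmul (A \<times> S) (bd A S D) (bd A S E) = bd A S (cmul S D E)"
  apply (subst (2) bd_def)
  apply (subst cmul_bd_bk, assumption)
  unfolding bd_def by (rule bk_cong) auto

lemma cfr_bd: "finite A \<Longrightarrow> cfr (A \<times> S) (bd A S D) = real (card A) * cfr S D"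
  unfolding bd_def cfr_bk by (simp add: if_distrib[where f="cfr S"] cong: if_cong)

lemma cg4_bd: "finite A \<Longrightarrow> cg4 (A \<times> S) (bd A S D) = real (card A) * cg4 S D"
  unfolding cg4_def bd_cadj by (simp add: cmul_bd_bd cfr_bd)

lemma cip_PR: "cip I (cmul I (cadj X) X) (cmul I (cadj Y) Y) = complex_of_real (cfr I (cmul I X (cadj Y)))"
proof -
  have "complex_of_real (cfr I (cmul I X (cadj Y))) = ctr I (cmul I (cmul I Y (cadj X)) (cmul I X (cadj Y)))"
    by (simp add: cfr_ctr cadj_cmul)
  also have "\<dots> = ctr I (cmul I Y (cmul I (cadj X) (cmul I X (cadj Y))))" by (simp add: cmul_assoc)
  also have "\<dots> = ctr I (cmul I (cmul I (cadj X) (cmul I X (cadj Y))) Y)" by (rule ctr_comm)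
  also have "\<dots> = ctr I (cmul I (cadj (cmul I (cadj X) X)) (cmul I (cadj Y) Y))"
    by (simp add: cmul_assoc cadj_herm)
  also have "\<dots> = cip I (cmul I (cadj X) X) (cmul I (cadj Y) Y)" by (rule ctr_cip)
  finally show ?thesis by simp
qed

lemma ctr_sum_lin: "(\<Sum>a\<in>A. ctr S (cmul S D (W a))) = ctr S (cmul S D (\<lambda>c d. \<Sum>a\<in>A. W a c d))"
  unfolding ctr_def cmul_def sum_distrib_left
  by (subst sum.swap, rule sum.cong[OF refl], rule sum.swap)

lemma ctr_zero_fun: "ctr S (cmul S D (\<lambda>_ _. 0)) = 0"
  by (simp add: ctr_def)

lemma sq_le_of_sqrt_le: "0 \<le> (x::real) \<Longrightarrow> sqrt x \<le> y \<Longrightarrow> x \<le> y^2"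
  by (metis real_sqrt_ge_zero real_sqrt_pow2 power_mono)

lemma block_main:
  fixes A S :: "nat set" and C :: "nat cm" and N :: "nat \<Rightarrow> nat \<Rightarrow> nat cm" and r :: real
  assumes fA: "finite A" and fS: "finite S" and N0: "\<And>c d. (\<Sum>a\<in>A. N a a c d) = 0" and r: "0 \<le> r"
  defines "g \<equiv> sqrt (cg4 S C)" and "h \<equiv> (\<Sum>a\<in>A. \<Sum>b\<in>A. sqrt (cg4 S (N a b)))"
  shows "cg4 (A \<times> S) (\<lambda>x y. bd A S C x y + complex_of_real r * bk A S N x y)
     \<le> real (card A) * g^2 + 6 * r^2 * g * h + 4 * r^3 * sqrt (g * h) * h + r^4 * h^2"
proof -
  let ?I = "A \<times> S"
  define X where "X = bd A S C"
  define Y where "Y = bk A S N"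
  define P where "P = cmul ?I (cadj X) X"
  define U1 where "U1 = cmul ?I (cadj X) Y"
  define U2 where "U2 = cmul ?I (cadj Y) X"
  define Q where "Q = (\<lambda>i j. U1 i j + U2 i j)"
  define R where "R = cmul ?I (cadj Y) Y"
  have g0: "0 \<le> g" unfolding g_def by simp
  have h0: "0 \<le> h" unfolding h_def by (intro sum_nonneg) simp
  have expand: "cg4 ?I (\<lambda>x y. X x y + complex_of_real r * Y x y) = cfr ?I P + r^2 * cfr ?I Q + r^4 * cfr ?I R
     + 2*r*Re (cip ?I P Q) + 2*r^2 * Re (cip ?I P R) + 2*r^3*Re (cip ?I Q R)"
  proof -
    have "cg4 ?I (\<lambda>x y. X x y + complex_of_real r * Y x y) =
       cfr ?I (\<lambda>i j. P i j + complex_of_real r * Q i j + complex_of_real (r^2) * R i j)"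
      unfolding cg4_def cmul_expand P_def Q_def R_def U1_def U2_def by simp
    also have "\<dots> = cfr ?I P + r^2 * cfr ?I Q + r^4 * cfr ?I R
     + 2*r*Re (cip ?I P Q) + 2*r^2 * Re (cip ?I P R) + 2*r^3*Re (cip ?I Q R)"
      unfolding cfr_expand3 cfr_scale cip_scale cip_scale1
      using r by (simp add: power2_eq_square power4_eq_xxxx power3_eq_cube mult.assoc norm_mult)
    finally show ?thesis .
  qed
  have F1: "cfr ?I P = real (card A) * g^2"
    unfolding P_def X_def g_def using cg4_bd[OF fA] by (simp add: cg4_def)
  have U1le: "cfr ?I U1 \<le> g * h"
  proof -
    have "cfr ?I U1 = (\<Sum>a\<in>A. \<Sum>b\<in>A. cfr S (cmul S (cadj C) (N a b)))"
      unfolding U1_def X_def Y_def bd_cadj cmul_bd_bk[OF fA] cfr_bk ..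
    also have "\<dots> \<le> (\<Sum>a\<in>A. \<Sum>b\<in>A. g * sqrt (cg4 S (N a b)))"
      unfolding g_def apply (intro sum_mono)
      subgoal for a b using cfr_cmul_le[OF fS, of "cadj C" "N a b"] by (simp add: cg4_cadj) done
    also have "\<dots> = g * h" unfolding h_def by (simp add: sum_distrib_left)
    finally show ?thesis .
  qed
  have U2le: "cfr ?I U2 \<le> g * h"
  proof -
    have "cfr ?I U2 = (\<Sum>a\<in>A. \<Sum>b\<in>A. cfr S (cmul S (cadj (N b a)) C))"
      unfolding U2_def X_def Y_def bk_cadj cmul_bk_bd[OF fA] cfr_bk ..
    also have "\<dots> \<le> (\<Sum>a\<in>A. \<Sum>b\<in>A. g * sqrt (cg4 S (N b a)))"
      unfolding g_def apply (intro sum_mono)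
      subgoal for a b using cfr_cmul_le[OF fS, of "cadj (N b a)" C] by (simp add: cg4_cadj mult.commute) done
    also have "\<dots> = g * h" unfolding h_def by (simp add: sum_distrib_left) (rule sum.swap)
    finally show ?thesis .
  qed
  have U3le: "cfr ?I (cmul ?I X (cadj Y)) \<le> g * h"
  proof -
    have "cfr ?I (cmul ?I X (cadj Y)) = (\<Sum>a\<in>A. \<Sum>b\<in>A. cfr S (cmul S C (cadj (N b a))))"
      unfolding X_def Y_def bk_cadj cmul_bd_bk[OF fA] cfr_bk ..
    also have "\<dots> \<le> (\<Sum>a\<in>A. \<Sum>b\<in>A. g * sqrt (cg4 S (N b a)))"
      unfolding g_def apply (intro sum_mono)
      subgoal for a b using cfr_cmul_le[OF fS, of C "cadj (N b a)"] by (simp add: cg4_cadj) done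
    also have "\<dots> = g * h" unfolding h_def by (simp add: sum_distrib_left) (rule sum.swap)
    finally show ?thesis .
  qed
  have FQ: "cfr ?I Q \<le> 4 * g * h"
  proof -
    have "sqrt (cfr ?I Q) \<le> sqrt (cfr ?I U1) + sqrt (cfr ?I U2)"
      unfolding Q_def by (rule sqrt_cfr_add)
    then have "cfr ?I Q \<le> (sqrt (cfr ?I U1) + sqrt (cfr ?I U2))^2"
      by (intro sq_le_of_sqrt_le) auto
    also have "\<dots> \<le> 2 * cfr ?I U1 + 2 * cfr ?I U2"
    proof -
      have "(sqrt (cfr ?I U1) - sqrt (cfr ?I U2))^2 \<ge> 0" by simp
      then show ?thesis by (simp add: power2_eq_square algebra_simps)
    qed
    finally show ?thesis using U1le U2le by linarith
  qed
  have F2: "cip ?I P Q = 0"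
  proof -
    have PX: "cmul ?I P (cadj X) = bd A S (cmul S (cmul S (cadj C) C) (cadj C))"
      unfolding P_def X_def bd_cadj by (simp add: cmul_bd_bd[OF fA])
    have XP: "cmul ?I X P = bd A S (cmul S C (cmul S (cadj C) C))"
      unfolding P_def X_def bd_cadj by (simp add: cmul_bd_bd[OF fA])
    have Z1: "(\<lambda>c d. \<Sum>a\<in>A. N a a c d) = (\<lambda>_ _. 0)" using N0 by auto
    have Z2: "(\<lambda>c d. \<Sum>a\<in>A. cadj (N a a) c d) = (\<lambda>_ _. 0)"
      unfolding cadj_def using N0 by (auto simp flip: cnj_sum)
    have c1: "cip ?I P U1 = 0"
    proof -
      have "cip ?I P U1 = ctr ?I (cmul ?I P (cmul ?I (cadj X) Y))"
        unfolding U1_def ctr_cip[symmetric] P_def cadj_herm ..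
      also have "\<dots> = ctr ?I (cmul ?I (cmul ?I P (cadj X)) Y)" by (simp add: cmul_assoc)
      also have "\<dots> = (\<Sum>a\<in>A. ctr S (cmul S (cmul S (cmul S (cadj C) C) (cadj C)) (N a a)))"
        unfolding PX Y_def cmul_bd_bk[OF fA] ctr_bk ..
      also have "\<dots> = 0" unfolding ctr_sum_lin Z1 ctr_zero_fun ..
      finally show ?thesis .
    qed
    have c2: "cip ?I P U2 = 0"
    proof -
      have "cip ?I P U2 = ctr ?I (cmul ?I P (cmul ?I (cadj Y) X))"
        unfolding U2_def ctr_cip[symmetric] P_def cadj_herm ..
      also have "\<dots> = ctr ?I (cmul ?I (cmul ?I P (cadj Y)) X)" by (simp add: cmul_assoc)
      also have "\<dots> = ctr ?I (cmul ?I X (cmul ?I P (cadj Y)))" by (rule ctr_comm)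
      also have "\<dots> = ctr ?I (cmul ?I (cmul ?I X P) (cadj Y))" by (simp add: cmul_assoc)
      also have "\<dots> = (\<Sum>a\<in>A. ctr S (cmul S (cmul S C (cmul S (cadj C) C)) (cadj (N a a))))"
        unfolding XP Y_def bk_cadj cmul_bd_bk[OF fA] ctr_bk ..
      also have "\<dots> = 0" unfolding ctr_sum_lin Z2 ctr_zero_fun ..
      finally show ?thesis .
    qed
    show ?thesis unfolding Q_def cip_add2 c1 c2 by simp
  qed
  have F4: "Re (cip ?I P R) \<le> g * h"
    unfolding P_def R_def cip_PR using U3le by simp
  have F6: "cfr ?I R \<le> h^2"
  proof -
    define s where "s = (\<lambda>a b. sqrt (cg4 S (N a b)))"
    have s0: "\<And>a b. 0 \<le> s a b" unfolding s_def by simp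
    have "cfr ?I R = (\<Sum>a\<in>A. \<Sum>b\<in>A. cfr S (\<lambda>c d. \<Sum>e\<in>A. cmul S (cadj (N e a)) (N e b) c d))"
      unfolding R_def Y_def bk_cadj bk_mm cfr_bk ..
    also have "\<dots> \<le> (\<Sum>a\<in>A. \<Sum>b\<in>A. (\<Sum>e\<in>A. s e a) * (\<Sum>e\<in>A. s e b))"
    proof (intro sum_mono)
      fix a b
      have "sqrt (cfr S (\<lambda>c d. \<Sum>e\<in>A. cmul S (cadj (N e a)) (N e b) c d))
          \<le> (\<Sum>e\<in>A. sqrt (cfr S (cmul S (cadj (N e a)) (N e b))))"
        by (rule sqrt_cfr_sum[OF fA])
      also have "\<dots> \<le> (\<Sum>e\<in>A. sqrt (s e a) * sqrt (s e b))"
      proof (intro sum_mono)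
        fix e
        have "cfr S (cmul S (cadj (N e a)) (N e b)) \<le> s e a * s e b"
          unfolding s_def using cfr_cmul_le[OF fS, of "cadj (N e a)" "N e b"] cg4_cadj by metis
        then show "sqrt (cfr S (cmul S (cadj (N e a)) (N e b))) \<le> sqrt (s e a) * sqrt (s e b)"
          by (metis real_sqrt_le_mono real_sqrt_mult)
      qed
      finally have le1: "sqrt (cfr S (\<lambda>c d. \<Sum>e\<in>A. cmul S (cadj (N e a)) (N e b) c d))
          \<le> (\<Sum>e\<in>A. sqrt (s e a) * sqrt (s e b))" .
      have "cfr S (\<lambda>c d. \<Sum>e\<in>A. cmul S (cadj (N e a)) (N e b) c d) \<le> (\<Sum>e\<in>A. sqrt (s e a) * sqrt (s e b))^2"
        by (rule sq_le_of_sqrt_le[OF cfr_nonneg le1])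
      also have "\<dots> \<le> (\<Sum>e\<in>A. (sqrt (s e a))^2) * (\<Sum>e\<in>A. (sqrt (s e b))^2)"
        by (rule Cauchy_Schwarz_ineq_sum)
      also have "\<dots> = (\<Sum>e\<in>A. s e a) * (\<Sum>e\<in>A. s e b)" using s0 by simp
      finally show "cfr S (\<lambda>c d. \<Sum>e\<in>A. cmul S (cadj (N e a)) (N e b) c d) \<le> (\<Sum>e\<in>A. s e a) * (\<Sum>e\<in>A. s e b)" .
    qed
    also have "\<dots> = (\<Sum>a\<in>A. \<Sum>e\<in>A. s e a) * (\<Sum>b\<in>A. \<Sum>e\<in>A. s e b)"
      by (simp add: sum_product)
    also have "\<dots> = h^2"
    proof -
      have "(\<Sum>a\<in>A. \<Sum>e\<in>A. s e a) = h" unfolding h_def s_def by (rule sum.swap)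
      then show ?thesis by (simp add: power2_eq_square)
    qed
    finally show ?thesis .
  qed
  have R0: "0 \<le> cfr ?I R" by simp
  have F5: "Re (cip ?I Q R) \<le> 2 * sqrt (g * h) * h"
  proof -
    have "Re (cip ?I Q R) \<le> cmod (cip ?I Q R)" by (rule complex_Re_le_cmod)
    also have "\<dots> \<le> sqrt (cfr ?I Q) * sqrt (cfr ?I R)" by (rule cip_cs) (use fA fS in simp)
    also have "\<dots> \<le> sqrt (4 * g * h) * sqrt (h^2)"
      using g0 h0 by (intro mult_mono real_sqrt_le_mono FQ F6) auto
    also have "\<dots> = 2 * sqrt (g * h) * h" using h0
      by (simp add: real_sqrt_mult mult.assoc)
    finally show ?thesis .
  qed
  have "cg4 ?I (\<lambda>x y. X x y + complex_of_real r * Y x y)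
     \<le> real (card A) * g^2 + r^2 * (4 * g * h) + r^4 * h^2 + 2*r*0 + 2*r^2 * (g*h) + 2*r^3*(2 * sqrt (g * h) * h)"
    unfolding expand F1 F2
    using FQ F6 F4 F5 r
    by (intro add_mono mult_left_mono order_refl) auto
  then show ?thesis unfolding X_def Y_def by (simp add: algebra_simps)
qed

lemma mat_adjoint_dim[simp]: "dim_row (mat_adjoint A) = dim_col A" "dim_col (mat_adjoint A) = dim_row A"
  unfolding mat_adjoint_def by auto

lemma mat_adjoint_index[simp]: "i < dim_col A \<Longrightarrow> j < dim_row A \<Longrightarrow> mat_adjoint A $$ (i,j) = cnj (A $$ (j,i))"
  unfolding mat_adjoint_def by (simp add: mat_of_rows_index)

definition mf :: "complex mat \<Rightarrow> nat cm" where "mf A = (\<lambda>i j. A $$ (i,j))"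

lemma H_index: assumes "A \<in> carrier_mat k k" "i < k" "j < k"
  shows "(mat_adjoint A * A) $$ (i,j) = cmul {..<k} (cadj (mf A)) (mf A) i j"
  using assms by (simp add: scalar_prod_def cmul_def cadj_def mf_def atLeast0LessThan)

lemma mat_tr_mult: assumes "X \<in> carrier_mat n n" "Y \<in> carrier_mat n n"
  shows "mat_tr (X * Y) = (\<Sum>i<n. \<Sum>j<n. X $$ (i,j) * Y $$ (j,i))"
  using assms by (simp add: mat_tr_def scalar_prod_def atLeast0LessThan)

lemma mat_tr_comm: assumes "X \<in> carrier_mat n n" "Y \<in> carrier_mat n n"
  shows "mat_tr (X * Y) = mat_tr (Y * X)"
  unfolding mat_tr_mult[OF assms] mat_tr_mult[OF assms(2,1)]
  by (subst sum.swap) (simp add: mult.commute)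

lemma proots_es: fixes es :: "complex list" shows "proots (\<Prod>e\<leftarrow>es. [:- e, 1:]) = mset es"
proof (induction es)
  case Nil then show ?case by simp
next
  case (Cons a es)
  have nz: "(\<Prod>e\<leftarrow>es. [:- e, 1:]) \<noteq> (0 :: complex poly)"
    by (auto simp: prod_list_zero_iff)
  have "proots (\<Prod>e\<leftarrow>a # es. [:- e, 1:]) = proots ([:- a, 1:] * (\<Prod>e\<leftarrow>es. [:- e, 1:]))"
    by simp
  also have "\<dots> = proots [:- a, 1:] + proots (\<Prod>e\<leftarrow>es. [:- e, 1:])"
    by (rule proots_mult) (use nz in auto)
  finally have "proots (\<Prod>e\<leftarrow>a # es. [:- e, 1:]) = proots [:- a, 1:] + proots (\<Prod>e\<leftarrow>es. [:- e, 1:])" .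
  then show ?case using Cons by simp
qed

lemma eig_real_nonneg:
  assumes A: "A \<in> carrier_mat k k" and e: "poly (char_poly (mat_adjoint A * A)) e = 0"
  shows "\<exists>x\<ge>0. e = complex_of_real x"
proof -
  define H where "H = mat_adjoint A * A"
  have H: "H \<in> carrier_mat k k" unfolding H_def using A by auto
  have "eigenvalue H e" using eigenvalue_root_char_poly[OF H] e unfolding H_def by simp
  then obtain v where v: "v \<in> carrier_vec k" "v \<noteq> 0\<^sub>v k" "H *\<^sub>v v = e \<cdot>\<^sub>v v"
    unfolding eigenvalue_def eigenvector_def using H by auto
  obtain i0 where i0: "i0 < k" "v $ i0 \<noteq> 0"
    using v(1,2) by (metis carrier_vecD eq_vecI index_zero_vec(1) index_zero_vec(2))
  define V where "V = (\<Sum>i<k. (cmod (v $ i))^2)"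
  have Vpos: "V > 0" unfolding V_def
    by (rule sum_pos2[of _ i0]) (use i0 in auto)
  define w where "w = (\<lambda>l. \<Sum>i<k. A $$ (l,i) * v $ i)"
  define W where "W = (\<Sum>l<k. (cmod (w l))^2)"
  have W0: "W \<ge> 0" unfolding W_def by (simp add: sum_nonneg)
  have Hv: "\<And>i. i < k \<Longrightarrow> (\<Sum>j<k. H $$ (i,j) * v $ j) = e * v $ i"
  proof -
    fix i assume i: "i < k"
    have "(H *\<^sub>v v) $ i = (\<Sum>j<k. H $$ (i,j) * v $ j)"
      using i H v(1) by (simp add: scalar_prod_def atLeast0LessThan)
    then show "(\<Sum>j<k. H $$ (i,j) * v $ j) = e * v $ i" using v(3) i v(1) by simp
  qed
  have "(\<Sum>i<k. cnj (v $ i) * (\<Sum>j<k. H $$ (i,j) * v $ j)) = e * complex_of_real V"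
  proof -
    have "(\<Sum>i<k. cnj (v $ i) * (\<Sum>j<k. H $$ (i,j) * v $ j)) = (\<Sum>i<k. e * (cnj (v $ i) * v $ i))"
      by (intro sum.cong refl) (simp add: Hv)
    also have "\<dots> = e * complex_of_real V"
      unfolding V_def of_real_sum complex_norm_square sum_distrib_left by (simp add: mult.commute)
    finally show ?thesis .
  qed
  moreover have "(\<Sum>i<k. cnj (v $ i) * (\<Sum>j<k. H $$ (i,j) * v $ j)) = complex_of_real W"
  proof -
    have "(\<Sum>i<k. cnj (v $ i) * (\<Sum>j<k. H $$ (i,j) * v $ j))
        = (\<Sum>i<k. \<Sum>j<k. \<Sum>l<k. cnj (A $$ (l,i) * v $ i) * (A $$ (l,j) * v $ j))"
    proof (rule sum.cong[OF refl])
      fix i assume i: "i \<in> {..<k}"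
      have "(\<Sum>j<k. H $$ (i,j) * v $ j) = (\<Sum>j<k. (\<Sum>l<k. cnj (A $$ (l,i)) * A $$ (l,j)) * v $ j)"
      proof (rule sum.cong[OF refl])
        fix j assume j: "j \<in> {..<k}"
        show "H $$ (i,j) * v $ j = (\<Sum>l<k. cnj (A $$ (l,i)) * A $$ (l,j)) * v $ j"
          unfolding H_def using H_index[OF A, of i j] i j by (simp add: cmul_def cadj_def mf_def)
      qed
      then show "cnj (v $ i) * (\<Sum>j<k. H $$ (i,j) * v $ j) = (\<Sum>j<k. \<Sum>l<k. cnj (A $$ (l,i) * v $ i) * (A $$ (l,j) * v $ j))"
        by (simp add: sum_distrib_left sum_distrib_right algebra_simps)
    qed
    also have "\<dots> = (\<Sum>i<k. \<Sum>l<k. \<Sum>j<k. cnj (A $$ (l,i) * v $ i) * (A $$ (l,j) * v $ j))"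
      by (rule sum.cong[OF refl]) (rule sum.swap)
    also have "\<dots> = (\<Sum>l<k. \<Sum>i<k. \<Sum>j<k. cnj (A $$ (l,i) * v $ i) * (A $$ (l,j) * v $ j))"
      by (rule sum.swap)
    also have "\<dots> = (\<Sum>l<k. cnj (w l) * w l)"
      unfolding w_def by (simp add: sum_distrib_left sum_distrib_right) (rule sum.cong[OF refl], rule sum.swap)
    also have "\<dots> = complex_of_real W"
      unfolding W_def of_real_sum complex_norm_square by (simp add: mult.commute)
    finally show ?thesis .
  qed
  ultimately have "e * complex_of_real V = complex_of_real W" by simp
  then have "e = complex_of_real (W / V)" using Vpos by (simp add: field_simps)
  then show ?thesis using W0 Vpos by (intro exI[of _ "W / V"]) auto
qed


lemma mat_tr_sim: assumes sim: "similar_mat_wit H B P Q" shows "mat_tr H = mat_tr B"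
proof -
  define n where "n = dim_row H"
  note d = similar_mat_witD[OF n_def sim]
  have "mat_tr H = mat_tr ((P * B) * Q)" using d by simp
  also have "\<dots> = mat_tr (Q * (P * B))" by (rule mat_tr_comm) (use d in auto)
  also have "Q * (P * B) = (Q * P) * B" by (rule assoc_mult_mat[symmetric]) (use d in auto)
  also have "\<dots> = B" using d by simp
  finally show ?thesis .
qed

lemma sing_sums: assumes A: "A \<in> carrier_mat k k"
  shows "sum_mset (image_mset (\<lambda>s. s powr 2) (sing_vals A)) = cfr {..<k} (mf A)"
    and "sum_mset (image_mset (\<lambda>s. s powr 4) (sing_vals A)) = cg4 {..<k} (mf A)"
proof -
  define H where "H = mat_adjoint A * A"
  have H: "H \<in> carrier_mat k k" unfolding H_def using A by auto
  obtain es where es: "char_poly H = (\<Prod>e\<leftarrow>es. [:- e, 1:])" "length es = k"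
    using char_poly_factorized[OF H] by blast
  obtain B P Q where sd: "schur_decomposition H es = (B,P,Q)" by (cases "schur_decomposition H es") auto
  from schur_decomposition[OF H es(1) sd]
  have sim: "similar_mat_wit H B P Q" and ut: "upper_triangular B" and dg: "diag_mat B = es" by auto
  note d = similar_mat_witD2[OF H sim]
  have Bk: "B \<in> carrier_mat k k" using d by simp
  have real: "\<And>i. i < k \<Longrightarrow> \<exists>x\<ge>0. B $$ (i,i) = complex_of_real x"
  proof -
    fix i assume i: "i < k"
    have "B $$ (i,i) \<in> set es" using dg[symmetric] i Bk by (auto simp: diag_mat_def)
    then have "poly (char_poly (mat_adjoint A * A)) (B $$ (i,i)) = 0"
      unfolding H_def[symmetric] es(1) poly_prod_list by (auto simp: prod_list_zero_iff)
    then show "\<exists>x\<ge>0. B $$ (i,i) = complex_of_real x" by (rule eig_real_nonneg[OF A])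
  qed
  have sv: "\<And>p. image_mset (\<lambda>s. s powr p) (sing_vals A) = mset (map (\<lambda>i. sqrt (Re (B $$ (i,i))) powr p) [0..<k])"
    unfolding sing_vals_def H_def[symmetric] es(1) proots_es dg[symmetric] diag_mat_def
    using Bk by (simp add: image_mset.compositionality o_def)
  have sumB: "\<And>F. sum_mset (mset (map F [0..<k])) = (\<Sum>i<k. F i)"
    by (simp only: sum_mset_sum_list sum_set_upt_conv_sum_list_nat[symmetric] set_upt atLeast0LessThan)
  have trH: "mat_tr H = complex_of_real (cfr {..<k} (mf A))"
  proof -
    have "mat_tr H = (\<Sum>i<k. H $$ (i,i))" using H by (simp add: mat_tr_def)
    also have "\<dots> = (\<Sum>i<k. cmul {..<k} (cadj (mf A)) (mf A) i i)"
      by (rule sum.cong[OF refl]) (unfold H_def, rule H_index[OF A], auto)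
    finally show ?thesis by (simp add: cfr_ctr ctr_def)
  qed
  have trHH: "mat_tr (H * H) = complex_of_real (cg4 {..<k} (mf A))"
    unfolding cg4_ctr ctr_def mat_tr_mult[OF H H] using H_index[OF A] unfolding H_def
    by (simp add: cmul_def)
  have HH: "similar_mat_wit (H * H) (B * B) P Q"
  proof -
    have "similar_mat_wit (H ^\<^sub>m 2) (B ^\<^sub>m 2) P Q" by (rule similar_mat_wit_pow[OF sim])
    moreover have "H ^\<^sub>m 2 = H * H" using H by (simp add: numeral_2_eq_2)
    moreover have "B ^\<^sub>m 2 = B * B" using Bk by (simp add: numeral_2_eq_2)
    ultimately show ?thesis by simp
  qed
  have BBii: "\<And>i. i < k \<Longrightarrow> (B * B) $$ (i,i) = B $$ (i,i) * B $$ (i,i)"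
  proof -
    fix i assume i: "i < k"
    have "(B * B) $$ (i,i) = (\<Sum>l<k. B $$ (i,l) * B $$ (l,i))"
      using Bk i by (simp add: scalar_prod_def atLeast0LessThan)
    also have "\<dots> = B $$ (i,i) * B $$ (i,i)"
    proof -
      have z: "\<And>l. l \<in> {..<k} - {i} \<Longrightarrow> B $$ (i,l) * B $$ (l,i) = 0"
        using ut Bk i unfolding upper_triangular_def by (auto simp: neq_iff)
      have "(\<Sum>l<k. B $$ (i,l) * B $$ (l,i)) = B $$ (i,i) * B $$ (i,i) + (\<Sum>l\<in>{..<k} - {i}. B $$ (i,l) * B $$ (l,i))"
        using i by (subst sum.remove[of "{..<k}" i]) auto
      then show ?thesis using z by simp
    qed
    finally show "(B * B) $$ (i,i) = B $$ (i,i) * B $$ (i,i)" .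
  qed
  have trB: "mat_tr B = (\<Sum>i<k. B $$ (i,i))" using Bk by (simp add: mat_tr_def)
  have trBB: "mat_tr (B * B) = (\<Sum>i<k. B $$ (i,i) * B $$ (i,i))" using Bk BBii by (simp add: mat_tr_def)
  show "sum_mset (image_mset (\<lambda>s. s powr 2) (sing_vals A)) = cfr {..<k} (mf A)"
  proof -
    have "sum_mset (image_mset (\<lambda>s. s powr 2) (sing_vals A)) = (\<Sum>i<k. Re (B $$ (i,i)))"
      unfolding sv sumB
      by (intro sum.cong refl) (use real in force)
    also have "\<dots> = Re (mat_tr H)" unfolding mat_tr_sim[OF sim] trB by simp
    finally show ?thesis unfolding trH by simp
  qed
  show "sum_mset (image_mset (\<lambda>s. s powr 4) (sing_vals A)) = cg4 {..<k} (mf A)"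
  proof -
    have "sum_mset (image_mset (\<lambda>s. s powr 4) (sing_vals A)) = (\<Sum>i<k. Re (B $$ (i,i) * B $$ (i,i)))"
      unfolding sv sumB
    proof (intro sum.cong refl)
      fix i assume "i \<in> {..<k}"
      then obtain x where x: "x \<ge> 0" "B $$ (i,i) = complex_of_real x" using real by blast
      have "sqrt x powr 4 = sqrt x ^ 4" using x by simp
      also have "\<dots> = x * x" using x by (simp add: power4_eq_xxxx real_sqrt_mult[symmetric])
      finally show "sqrt (Re (B $$ (i,i))) powr 4 = Re (B $$ (i,i) * B $$ (i,i))" using x by simp
    qed
    also have "\<dots> = Re (mat_tr (H * H))" unfolding mat_tr_sim[OF HH] trBB by simp
    finally show ?thesis unfolding trHH by simp
  qed
qed

definition dco :: "nat \<Rightarrow> real \<Rightarrow> nat \<Rightarrow> nat \<Rightarrow> nat \<Rightarrow> nat \<Rightarrow> complex" where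
  "dco m \<rho> a b c d = (if c = a \<and> d = b then complex_of_real \<rho> else 0)
     + (if a = b \<and> c = d then complex_of_real ((1 - \<rho>) / real m) else 0)"

lemma mat_tr_unit: "a < m \<Longrightarrow> b < m \<Longrightarrow> mat_tr (unit_mat m a b) = (if a = b then 1 else 0)"
proof -
  assume a: "a < m" and b: "b < m"
  have "mat_tr (unit_mat m a b) = (\<Sum>i<m. if i = a \<and> i = b then 1 else 0)"
    unfolding mat_tr_def unit_mat_def by simp
  also have "\<dots> = (\<Sum>i<m. if i = a then (if a = b then 1 else 0) else 0)"
    by (intro sum.cong refl) auto
  also have "\<dots> = (if a = b then 1 else 0)" using a by simp
  finally show ?thesis .
qed

lemma noise_unit: assumes "a < m" "b < m" "c < m" "d < m"
  shows "noise_op m \<rho> (unit_mat m a b) $$ (c,d) = dco m \<rho> a b c d"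
  using assms unfolding noise_op_def dco_def
  by (simp add: mat_tr_unit) (auto simp: unit_mat_def)

definition tpf :: "nat \<Rightarrow> real \<Rightarrow> nat \<Rightarrow> nat cm \<Rightarrow> nat cm" where
  "tpf m \<rho> n M = (\<lambda>c d. \<Sum>a<m^n. \<Sum>b<m^n.
      (\<Prod>j<n. dco m \<rho> (digit m j a) (digit m j b) (digit m j c) (digit m j d)) * M a b)"

lemma digit_lt: "0 < m \<Longrightarrow> digit m j i < m"
  unfolding digit_def by simp

lemma tpm_entry: assumes m: "0 < m" and c: "c < m^n" and d: "d < m^n"
  shows "tensor_pow_map m n (noise_op m \<rho>) M $$ (c,d) = tpf m \<rho> n (mf M) c d"
  unfolding tensor_pow_map_def tpf_def mf_def using c d
  by (simp add: noise_unit digit_lt[OF m])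

lemma tpm_carrier: "tensor_pow_map m n L M \<in> carrier_mat (m^n) (m^n)"
  unfolding tensor_pow_map_def by simp

lemma digit_low: assumes m: "0 < m" and j: "j < n" and a0: "a0 < m^n"
  shows "digit m j (a0 + m^n * a1) = digit m j a0"
proof -
  have nj: "n = j + Suc (n - Suc j)" using j by simp
  have mn: "m^n = m^j * (m * m^(n - Suc j))"
    by (subst nj, simp only: power_add power_Suc)
  have mj: "m^j \<noteq> 0" using m by simp
  have "(a0 + m^n * a1) div m^j = (a0 + m^j * (m * (m^(n - Suc j) * a1))) div m^j"
    unfolding mn by (simp only: mult.assoc)
  also have "\<dots> = m * (m^(n - Suc j) * a1) + a0 div m^j"
    by (rule div_mult_self2[OF mj])
  finally have eq: "(a0 + m^n * a1) div m^j = m * (m^(n - Suc j) * a1) + a0 div m^j" .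
  show ?thesis unfolding digit_def eq by simp
qed

lemma digit_top: assumes m: "0 < m" and a0: "a0 < m^n" and a1: "a1 < m"
  shows "digit m n (a0 + m^n * a1) = a1"
proof -
  have mn: "m^n \<noteq> 0" using m by simp
  have "(a0 + m^n * a1) div m^n = a1 + a0 div m^n" by (rule div_mult_self2[OF mn])
  also have "a0 div m^n = 0" using a0 by simp
  finally show ?thesis unfolding digit_def using a1 by simp
qed

lemma bij_split: fixes m k :: nat assumes k: "0 < k" shows "bij_betw (\<lambda>x. snd x + k * fst x) ({..<m} \<times> {..<k}) {..<m * k}"
proof (rule bij_betw_byWitness[where f' = "\<lambda>i. (i div k, i mod k)"])
  show "\<forall>a\<in>{..<m} \<times> {..<k}. ((snd a + k * fst a) div k, (snd a + k * fst a) mod k) = a"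
    using k by auto
  show "\<forall>a'\<in>{..<m * k}. snd (a' div k, a' mod k) + k * fst (a' div k, a' mod k) = a'" by simp
  show "(\<lambda>x. snd x + k * fst x) ` ({..<m} \<times> {..<k}) \<subseteq> {..<m * k}"
  proof
    fix y assume "y \<in> (\<lambda>x. snd x + k * fst x) ` ({..<m} \<times> {..<k})"
    then obtain x where x: "x \<in> {..<m} \<times> {..<k}" and y: "y = snd x + k * fst x" by blast
    have "snd x + k * fst x < k + k * fst x" using x by auto
    also have "\<dots> = k * Suc (fst x)" by simp
    also have "\<dots> \<le> k * m" using x by (intro mult_le_mono2) auto
    finally show "y \<in> {..<m * k}" using y by (simp add: mult.commute)
  qed
  show "(\<lambda>i. (i div k, i mod k)) ` {..<m * k} \<subseteq> {..<m} \<times> {..<k}"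
    using k by (auto simp: less_mult_imp_div_less)
qed

lemma sum_split: fixes m k :: nat assumes "0 < k"
  shows "(\<Sum>i<m * k. f i) = (\<Sum>a<m. \<Sum>c<k. f (c + k * a))"
proof -
  have "(\<Sum>i<m * k. f i) = (\<Sum>x\<in>{..<m} \<times> {..<k}. f (snd x + k * fst x))"
    by (rule sum.reindex_bij_betw[OF bij_split[OF assms], symmetric])
  also have "\<dots> = (\<Sum>a<m. \<Sum>c<k. f (c + k * a))" by (simp add: sum.cartesian_product')
  finally show ?thesis .
qed

lemma tpf_Suc: assumes m: "0 < m" and c0: "c0 < m^n" and d0: "d0 < m^n" and c1: "c1 < m" and d1: "d1 < m"
  shows "tpf m \<rho> (Suc n) M (c0 + m^n * c1) (d0 + m^n * d1) =
    (\<Sum>a1<m. \<Sum>b1<m. dco m \<rho> a1 b1 c1 d1 * tpf m \<rho> n (\<lambda>x y. M (x + m^n * a1) (y + m^n * b1)) c0 d0)"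
proof -
  let ?k = "m^n"
  have k: "0 < ?k" using m by simp
  have split: "\<And>f. (\<Sum>i<m^Suc n. f i) = (\<Sum>a1<m. \<Sum>a0<?k. f (a0 + ?k * a1))"
    using sum_split[OF k] by (simp add: mult.commute)
  let ?P = "\<lambda>a0 b0. (\<Prod>j<n. dco m \<rho> (digit m j a0) (digit m j b0) (digit m j c0) (digit m j d0))"
  have "tpf m \<rho> (Suc n) M (c0 + ?k * c1) (d0 + ?k * d1) =
     (\<Sum>a1<m. \<Sum>a0<?k. \<Sum>b1<m. \<Sum>b0<?k. ?P a0 b0 * dco m \<rho> a1 b1 c1 d1 * M (a0 + ?k * a1) (b0 + ?k * b1))"
    unfolding tpf_def split
  proof (intro sum.cong refl)
    fix a1 a0 b1 b0 assume a1: "a1 \<in> {..<m}" and a0: "a0 \<in> {..<?k}" and b1: "b1 \<in> {..<m}" and b0: "b0 \<in> {..<?k}"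
    have "(\<Prod>j<n. dco m \<rho> (digit m j (a0 + ?k * a1)) (digit m j (b0 + ?k * b1)) (digit m j (c0 + ?k * c1)) (digit m j (d0 + ?k * d1)))
        = ?P a0 b0"
      using a0 b0 c0 d0 m by (intro prod.cong refl) (simp add: digit_low)
    moreover have "dco m \<rho> (digit m n (a0 + ?k * a1)) (digit m n (b0 + ?k * b1)) (digit m n (c0 + ?k * c1)) (digit m n (d0 + ?k * d1))
       = dco m \<rho> a1 b1 c1 d1"
      using a0 b0 c0 d0 a1 b1 c1 d1 m by (simp add: digit_top)
    ultimately show "(\<Prod>j<Suc n. dco m \<rho> (digit m j (a0 + ?k * a1)) (digit m j (b0 + ?k * b1)) (digit m j (c0 + ?k * c1)) (digit m j (d0 + ?k * d1)))
        * M (a0 + ?k * a1) (b0 + ?k * b1) = ?P a0 b0 * dco m \<rho> a1 b1 c1 d1 * M (a0 + ?k * a1) (b0 + ?k * b1)"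
      by simp
  qed
  also have "\<dots> = (\<Sum>a1<m. \<Sum>b1<m. \<Sum>a0<?k. \<Sum>b0<?k. ?P a0 b0 * dco m \<rho> a1 b1 c1 d1 * M (a0 + ?k * a1) (b0 + ?k * b1))"
    by (rule sum.cong[OF refl]) (rule sum.swap)
  also have "\<dots> = (\<Sum>a1<m. \<Sum>b1<m. dco m \<rho> a1 b1 c1 d1 * tpf m \<rho> n (\<lambda>x y. M (x + ?k * a1) (y + ?k * b1)) c0 d0)"
    unfolding tpf_def by (simp add: sum_distrib_left algebra_simps)
  finally show ?thesis .
qed

lemma tpf_diff: "tpf m \<rho> n (\<lambda>x y. U x y - V x y) c d = tpf m \<rho> n U c d - tpf m \<rho> n V c d"
  unfolding tpf_def by (simp add: algebra_simps sum_subtractf)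

lemma tpf_sum: "tpf m \<rho> n (\<lambda>x y. \<alpha> * (\<Sum>e\<in>E. U e x y)) c d = \<alpha> * (\<Sum>e\<in>E. tpf m \<rho> n (U e) c d)"
  unfolding tpf_def sum_distrib_left
  by (subst sum.swap, rule sum.cong[OF refl], subst sum.swap, rule sum.cong[OF refl]) (simp add: algebra_simps sum_distrib_left)

lemma tpf_zero: "tpf m \<rho> n (\<lambda>x y. 0) = (\<lambda>c d. 0)"
  unfolding tpf_def by simp

lemma dco_sum: assumes c1: "c1 < m" and d1: "d1 < m"
  shows "(\<Sum>a1<m. \<Sum>b1<m. dco m \<rho> a1 b1 c1 d1 * T a1 b1) =
    complex_of_real \<rho> * T c1 d1 + (if c1 = d1 then complex_of_real ((1 - \<rho>) / real m) * (\<Sum>a<m. T a a) else 0)"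
proof -
  have "(\<Sum>a1<m. \<Sum>b1<m. dco m \<rho> a1 b1 c1 d1 * T a1 b1) =
     (\<Sum>a1<m. \<Sum>b1<m. (if c1 = a1 \<and> d1 = b1 then complex_of_real \<rho> * T a1 b1 else 0)
        + (if a1 = b1 \<and> c1 = d1 then complex_of_real ((1 - \<rho>) / real m) * T a1 b1 else 0))"
    unfolding dco_def by (intro sum.cong refl) (simp add: distrib_right)
  also have "\<dots> = (\<Sum>a1<m. \<Sum>b1<m. (if c1 = a1 \<and> d1 = b1 then complex_of_real \<rho> * T a1 b1 else 0))
        + (\<Sum>a1<m. \<Sum>b1<m. (if a1 = b1 \<and> c1 = d1 then complex_of_real ((1 - \<rho>) / real m) * T a1 b1 else 0))"
    by (simp add: sum.distrib)
  also have "(\<Sum>a1<m. \<Sum>b1<m. (if c1 = a1 \<and> d1 = b1 then complex_of_real \<rho> * T a1 b1 else 0))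
      = complex_of_real \<rho> * T c1 d1"
  proof -
    have "(\<Sum>a1<m. \<Sum>b1<m. (if c1 = a1 \<and> d1 = b1 then complex_of_real \<rho> * T a1 b1 else 0))
       = (\<Sum>a1<m. if a1 = c1 then complex_of_real \<rho> * T a1 d1 else 0)"
      using d1 by (intro sum.cong refl) (auto simp: if_distrib cong: if_cong)
    also have "\<dots> = complex_of_real \<rho> * T c1 d1" using c1 by simp
    finally show ?thesis .
  qed
  also have "(\<Sum>a1<m. \<Sum>b1<m. (if a1 = b1 \<and> c1 = d1 then complex_of_real ((1 - \<rho>) / real m) * T a1 b1 else 0))
      = (if c1 = d1 then complex_of_real ((1 - \<rho>) / real m) * (\<Sum>a<m. T a a) else 0)"
  proof (cases "c1 = d1")
    case True
    have "(\<Sum>a1<m. \<Sum>b1<m. (if a1 = b1 \<and> c1 = d1 then complex_of_real ((1 - \<rho>) / real m) * T a1 b1 else 0))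
       = (\<Sum>a1<m. complex_of_real ((1 - \<rho>) / real m) * T a1 a1)"
      using True by (intro sum.cong refl) (simp add: if_distrib cong: if_cong)
    then show ?thesis using True by (simp add: sum_distrib_left)
  qed simp
  finally show ?thesis .
qed

lemma cmul_cong: "(\<And>i j. i \<in> I \<Longrightarrow> j \<in> I \<Longrightarrow> A i j = B i j) \<Longrightarrow> i \<in> I \<Longrightarrow> j \<in> I
   \<Longrightarrow> cmul I (cadj A) A i j = cmul I (cadj B) B i j"
  unfolding cmul_def cadj_def by (intro sum.cong refl) auto

lemma cg4_cong: "(\<And>i j. i \<in> I \<Longrightarrow> j \<in> I \<Longrightarrow> A i j = B i j) \<Longrightarrow> cg4 I A = cg4 I B"
  unfolding cg4_def by (rule cfr_cong) (rule cmul_cong)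

lemma cfr_reindex: "bij_betw h J I \<Longrightarrow> cfr J (\<lambda>x y. A (h x) (h y)) = cfr I A"
  unfolding cfr_def
  by (subst sum.reindex_bij_betw[where h=h, symmetric], assumption,
      rule sum.cong[OF refl], rule sum.reindex_bij_betw)

lemma cg4_reindex: assumes h: "bij_betw h J I" shows "cg4 J (\<lambda>x y. A (h x) (h y)) = cg4 I A"
proof -
  have "cmul J (cadj (\<lambda>x y. A (h x) (h y))) (\<lambda>x y. A (h x) (h y)) = (\<lambda>x y. cmul I (cadj A) A (h x) (h y))"
    unfolding cmul_def cadj_def by (intro ext) (rule sum.reindex_bij_betw[OF h])
  then show ?thesis unfolding cg4_def using cfr_reindex[OF h] by simp
qed

lemma var_decomp: fixes v :: "nat \<Rightarrow> complex"
  assumes fA: "finite A" and m: "card A = m" "0 < m"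
  defines "z \<equiv> (\<Sum>a\<in>A. v a) / of_nat m"
  shows "(\<Sum>a\<in>A. (cmod (v a))^2) = real m * (cmod z)^2 + (\<Sum>a\<in>A. (cmod (v a - z))^2)"
proof -
  have pt: "\<And>a. (cmod (v a - z))^2 = (cmod (v a))^2 + (cmod z)^2 - 2 * Re (cnj z * v a)"
    by (simp only: cmod_power2) (simp add: power2_eq_square algebra_simps)
  have sv: "(\<Sum>a\<in>A. v a) = of_nat m * z" unfolding z_def using m by simp
  have "(\<Sum>a\<in>A. Re (cnj z * v a)) = Re (cnj z * (\<Sum>a\<in>A. v a))"
    by (simp add: sum_distrib_left Re_sum)
  also have "\<dots> = real m * (cmod z)^2"
    unfolding sv cmod_power2 by (simp add: power2_eq_square algebra_simps)
  finally have "(\<Sum>a\<in>A. Re (cnj z * v a)) = real m * (cmod z)^2" .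
  then show ?thesis unfolding pt using m by (simp add: sum.distrib sum_subtractf sum_distrib_left[symmetric])
qed


lemma orth: fixes Mb :: "nat \<Rightarrow> nat \<Rightarrow> nat cm"
  assumes fA: "finite A" and m: "card A = m" "0 < m"
    and M0_def: "M0 = (\<lambda>x y. (1 / of_nat m) * (\<Sum>a\<in>A. Mb a a x y))"
    and Mp_def: "Mp = (\<lambda>a b x y. Mb a b x y - (if a = b then M0 x y else 0))"
  shows "(\<Sum>a\<in>A. \<Sum>b\<in>A. cfr S (Mb a b)) = real m * cfr S M0 + (\<Sum>a\<in>A. \<Sum>b\<in>A. cfr S (Mp a b))"
proof -
  have row: "(\<Sum>b\<in>A. cfr S (Mb a b)) = (\<Sum>b\<in>A. cfr S (Mp a b)) + (cfr S (Mb a a) - cfr S (Mp a a))"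
    if a: "a \<in> A" for a
  proof -
    have eqo: "(\<Sum>b\<in>A - {a}. cfr S (Mb a b)) = (\<Sum>b\<in>A - {a}. cfr S (Mp a b))"
      by (intro sum.cong refl) (auto simp: Mp_def)
    have "(\<Sum>b\<in>A. cfr S (Mb a b)) = cfr S (Mb a a) + (\<Sum>b\<in>A - {a}. cfr S (Mb a b))"
      using fA a by (rule sum.remove)
    moreover have "(\<Sum>b\<in>A. cfr S (Mp a b)) = cfr S (Mp a a) + (\<Sum>b\<in>A - {a}. cfr S (Mp a b))"
      using fA a by (rule sum.remove)
    ultimately show ?thesis using eqo by simp
  qed
  have diag: "(\<Sum>a\<in>A. cfr S (Mb a a)) = real m * cfr S M0 + (\<Sum>a\<in>A. cfr S (Mp a a))"
  proof -
    have sw: "\<And>f :: nat \<Rightarrow> nat \<Rightarrow> nat \<Rightarrow> real. (\<Sum>a\<in>A. \<Sum>x\<in>S. \<Sum>y\<in>S. f a x y) = (\<Sum>x\<in>S. \<Sum>y\<in>S. \<Sum>a\<in>A. f a x y)"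
      by (subst sum.swap, rule sum.cong[OF refl], rule sum.swap)
    have "(\<Sum>a\<in>A. cfr S (Mb a a)) = (\<Sum>x\<in>S. \<Sum>y\<in>S. \<Sum>a\<in>A. (cmod (Mb a a x y))^2)"
      unfolding cfr_def by (rule sw)
    also have "\<dots> = (\<Sum>x\<in>S. \<Sum>y\<in>S. real m * (cmod (M0 x y))^2 + (\<Sum>a\<in>A. (cmod (Mb a a x y - M0 x y))^2))"
    proof (intro sum.cong refl)
      fix x y
      have z: "M0 x y = (\<Sum>a\<in>A. Mb a a x y) / of_nat m" unfolding M0_def by simp
      show "(\<Sum>a\<in>A. (cmod (Mb a a x y))^2) = real m * (cmod (M0 x y))^2 + (\<Sum>a\<in>A. (cmod (Mb a a x y - M0 x y))^2)"
        unfolding z by (rule var_decomp[OF fA m])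
    qed
    also have "\<dots> = real m * cfr S M0 + (\<Sum>x\<in>S. \<Sum>y\<in>S. \<Sum>a\<in>A. (cmod (Mb a a x y - M0 x y))^2)"
      unfolding cfr_def by (simp add: sum.distrib sum_distrib_left)
    also have "(\<Sum>x\<in>S. \<Sum>y\<in>S. \<Sum>a\<in>A. (cmod (Mb a a x y - M0 x y))^2) = (\<Sum>a\<in>A. cfr S (Mp a a))"
      unfolding cfr_def Mp_def by (simp add: sw)
    finally show ?thesis .
  qed
  have "(\<Sum>a\<in>A. \<Sum>b\<in>A. cfr S (Mb a b)) = (\<Sum>a\<in>A. (\<Sum>b\<in>A. cfr S (Mp a b)) + (cfr S (Mb a a) - cfr S (Mp a a)))"
    by (intro sum.cong refl row)
  also have "\<dots> = (\<Sum>a\<in>A. \<Sum>b\<in>A. cfr S (Mp a b)) + (\<Sum>a\<in>A. cfr S (Mb a a)) - (\<Sum>a\<in>A. cfr S (Mp a a))"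
    by (simp add: sum.distrib sum_subtractf)
  finally show ?thesis unfolding diag by simp
qed

lemma core_arith: fixes w p F T :: real
  assumes w2: "2 \<le> w^2" and w0: "0 < w" and p0: "0 \<le> p" and t: "p^2 * w \<le> 1/3" and F0: "0 \<le> F" and T0: "0 \<le> T"
  shows "w^2 * (w^2 * F^4 + 6*p^2*F^2*T^2 + 4*p^3*(F*T)*T^2 + p^4*T^4) \<le> (w^2*F^2 + T^2)^2"
proof -
  have w43: "4/3 \<le> w"
  proof (rule ccontr)
    assume "\<not> 4/3 \<le> w"
    then have "w^2 < (4/3)^2" using w0 by (intro power_strict_mono) auto
    moreover have "(4/3::real)^2 < 2" by (simp add: power2_eq_square)
    ultimately show False using w2 by linarith
  qed
  have t0: "0 \<le> p^2 * w" using w0 by simp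
  define X1 where "X1 = p^2*w^2*F^2*T^2"
  define X2 where "X2 = p^3*w^2*F*T^3"
  define X3 where "X3 = p^4*w^2*T^4"
  define Y where "Y = w^2*F^2*T^2"
  define Z where "Z = p^2*T^4"
  have e1: "w^2 * (w^2 * F^4 + 6*p^2*F^2*T^2 + 4*p^3*(F*T)*T^2 + p^4*T^4) = w^4*F^4 + 6*X1 + 4*X2 + X3"
    unfolding X1_def X2_def X3_def by (simp add: algebra_simps power2_eq_square power3_eq_cube power4_eq_xxxx)
  have e2: "(w^2*F^2 + T^2)^2 = w^4*F^4 + 2*Y + T^4"
    unfolding Y_def by (simp add: algebra_simps power2_eq_square power3_eq_cube power4_eq_xxxx)
  have a1: "6*X1 \<le> (3/2)*Y"
  proof -
    have "6 * (p^2 * w^2) = 6 * (p^2 * w) * w" by (simp add: power2_eq_square)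
    also have "\<dots> \<le> 6 * (1/3) * w" by (rule mult_right_mono[OF mult_left_mono[OF t]]) (use w0 in auto)
    also have "\<dots> \<le> (3/2) * w^2" using w43 by (simp add: power2_eq_square)
    finally have "6 * (p^2 * w^2) \<le> (3/2) * w^2" .
    then have "6 * (p^2 * w^2) * (F^2*T^2) \<le> (3/2) * w^2 * (F^2*T^2)" by (rule mult_right_mono) simp
    then show ?thesis unfolding X1_def Y_def by (simp add: algebra_simps)
  qed
  have a2: "4*X2 \<le> (1/2)*Y + (8/9)*Z"
  proof -
    have pos: "0 \<le> p*w*F*T*T^2" using p0 w0 F0 T0 by simp
    have "4*X2 = 4 * (p^2*w) * (p*w*F*T*T^2)" unfolding X2_def by (simp add: algebra_simps power2_eq_square power3_eq_cube)
    also have "\<dots> \<le> 4 * (1/3) * (p*w*F*T*T^2)" by (rule mult_right_mono[OF mult_left_mono[OF t]]) (use pos in auto)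
    also have "\<dots> \<le> ((1/2)*w^2*F^2 + (8/9)*p^2*T^2) * T^2"
    proof -
      have "0 \<le> (1/2) * (w*F - (4/3)*p*T)^2" by simp
      then have "(4/3)*(p*w*F*T) \<le> (1/2)*w^2*F^2 + (8/9)*p^2*T^2" by (simp add: power2_eq_square algebra_simps)
      then have "(4/3)*(p*w*F*T) * T^2 \<le> ((1/2)*w^2*F^2 + (8/9)*p^2*T^2) * T^2" by (rule mult_right_mono) simp
      then show ?thesis by (simp add: algebra_simps)
    qed
    also have "\<dots> = (1/2)*Y + (8/9)*Z" unfolding Y_def Z_def by (simp add: algebra_simps power2_eq_square power4_eq_xxxx)
    finally show ?thesis .
  qed
  have a3: "X3 \<le> (1/9) * T^4"
  proof -
    have "(p^2*w)^2 \<le> (1/3)^2" using t t0 by (intro power_mono) auto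
    then have "(p^2*w)^2 * T^4 \<le> (1/3)^2 * T^4" by (rule mult_right_mono) simp
    then show ?thesis unfolding X3_def by (simp add: power2_eq_square power4_eq_xxxx algebra_simps)
  qed
  have a4: "Z \<le> T^4"
  proof -
    have "p^2 * (4/3) \<le> p^2 * w" using w43 by (intro mult_left_mono) auto
    then have "p^2 \<le> 1" using t by simp
    then have "p^2 * T^4 \<le> 1 * T^4" by (rule mult_right_mono) simp
    then show ?thesis unfolding Z_def by simp
  qed
  show ?thesis unfolding e1 e2 using a1 a2 a3 a4 by linarith
qed

lemma final_arith: fixes m k g h f s \<rho> :: real
  assumes m: "2 \<le> m" and k: "0 < k" and r0: "0 \<le> \<rho>" and rt: "\<rho>^2 * sqrt m \<le> 1/3"
    and g0: "0 \<le> g" and h0: "0 \<le> h" and gf: "sqrt k * g \<le> f" and hs: "sqrt k * h \<le> s"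
  shows "m * k * (m * g^2 + 6 * \<rho>^2 * g * h + 4 * \<rho>^3 * sqrt (g * h) * h + \<rho>^4 * h^2) \<le> (m * f + s)^2"
proof -
  define G where "G = sqrt k * g"
  define H where "H = sqrt k * h"
  have G0: "0 \<le> G" unfolding G_def using g0 k by simp
  have H0: "0 \<le> H" unfolding H_def using h0 k by simp
  have f0: "0 \<le> f" using G0 gf unfolding G_def by linarith
  have s0: "0 \<le> s" using H0 hs unfolding H_def by linarith
  have sk: "sqrt k * sqrt k = k" using k by simp
  have e0: "m * k * (m * g^2 + 6 * \<rho>^2 * g * h + 4 * \<rho>^3 * sqrt (g * h) * h + \<rho>^4 * h^2)
     = m * (m * (k * g^2) + 6 * \<rho>^2 * (k * (g * h)) + 4 * \<rho>^3 * (k * (sqrt (g * h) * h)) + \<rho>^4 * (k * h^2))"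
    by (simp add: algebra_simps)
  have e1: "k * g^2 = G^2" unfolding G_def power_mult_distrib using k by simp
  have e2: "k * h^2 = H^2" unfolding H_def power_mult_distrib using k by simp
  have e3: "k * (g * h) = G * H"
  proof -
    have "G * H = (sqrt k * sqrt k) * (g * h)" unfolding G_def H_def by (simp only: mult_ac)
    then show ?thesis using sk by simp
  qed
  have e4: "k * (sqrt (g * h) * h) = sqrt (G * H) * H"
  proof -
    have "sqrt (G * H) = sqrt k * sqrt (g * h)" unfolding e3[symmetric] by (simp add: real_sqrt_mult)
    then have "sqrt (G * H) * H = (sqrt k * sqrt k) * (sqrt (g * h) * h)" unfolding H_def by (simp only: mult_ac)
    then show ?thesis using sk by simp
  qed
  have GH: "G \<le> f" "H \<le> s" unfolding G_def H_def using gf hs by auto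
  have m1: "G^2 \<le> f^2" using GH G0 by (intro power_mono) auto
  have m2: "G * H \<le> f * s" using GH G0 H0 by (intro mult_mono) auto
  have m3: "sqrt (G * H) * H \<le> sqrt (f * s) * s"
    using GH G0 H0 f0 s0 m2 by (intro mult_mono real_sqrt_le_mono) auto
  have m4: "H^2 \<le> s^2" using GH H0 by (intro power_mono) auto
  have r2: "0 \<le> 6 * \<rho>^2" and r3: "0 \<le> 4 * \<rho>^3" and r4: "0 \<le> \<rho>^4" using r0 by auto
  have mono: "m * (m * G^2 + 6 * \<rho>^2 * (G * H) + 4 * \<rho>^3 * (sqrt (G * H) * H) + \<rho>^4 * H^2)
     \<le> m * (m * f^2 + 6 * \<rho>^2 * (f * s) + 4 * \<rho>^3 * (sqrt (f * s) * s) + \<rho>^4 * s^2)"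
  proof (rule mult_left_mono)
    show "0 \<le> m" using m by simp
    have "m * G^2 \<le> m * f^2" using m1 m by (intro mult_left_mono) auto
    moreover have "6 * \<rho>^2 * (G * H) \<le> 6 * \<rho>^2 * (f * s)" using m2 r2 by (rule mult_left_mono)
    moreover have "4 * \<rho>^3 * (sqrt (G * H) * H) \<le> 4 * \<rho>^3 * (sqrt (f * s) * s)" using m3 r3 by (rule mult_left_mono)
    moreover have "\<rho>^4 * H^2 \<le> \<rho>^4 * s^2" using m4 r4 by (rule mult_left_mono)
    ultimately show "m * G^2 + 6 * \<rho>^2 * (G * H) + 4 * \<rho>^3 * (sqrt (G * H) * H) + \<rho>^4 * H^2
     \<le> m * f^2 + 6 * \<rho>^2 * (f * s) + 4 * \<rho>^3 * (sqrt (f * s) * s) + \<rho>^4 * s^2" by linarith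
  qed
  define w where "w = sqrt m"
  define F where "F = sqrt f"
  define T where "T = sqrt s"
  have w0: "0 < w" unfolding w_def using m by simp
  have mw: "w^2 = m" unfolding w_def using m by simp
  have fF: "F^2 = f" unfolding F_def using f0 by simp
  have fF4: "F^4 = f^2" using fF by (metis power_mult numeral_times_numeral semiring_norm(12) power2_eq_square power4_eq_xxxx mult.assoc)
  have sT: "T^2 = s" unfolding T_def using s0 by simp
  have sT4: "T^4 = s^2" using sT by (metis power_mult numeral_times_numeral semiring_norm(12) power2_eq_square power4_eq_xxxx mult.assoc)
  have fs: "F * T = sqrt (f * s)" unfolding F_def T_def by (simp add: real_sqrt_mult)
  have core: "w^2 * (w^2 * F^4 + 6*\<rho>^2*F^2*T^2 + 4*\<rho>^3*(F*T)*T^2 + \<rho>^4*T^4) \<le> (w^2*F^2 + T^2)^2"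
    by (rule core_arith) (use m w0 r0 rt f0 s0 in \<open>auto simp: mw w_def F_def T_def\<close>)
  then have core': "m * (m * f^2 + 6*\<rho>^2*f*s + 4*\<rho>^3*sqrt (f * s)*s + \<rho>^4*s^2) \<le> (m*f + s)^2"
    unfolding mw fF fF4 sT sT4 fs .
  have "m * (m * f^2 + 6 * \<rho>^2 * (f * s) + 4 * \<rho>^3 * (sqrt (f * s) * s) + \<rho>^4 * s^2) \<le> (m*f + s)^2"
    using core' by (simp only: mult.assoc)
  then show ?thesis unfolding e0 e1 e2 e3 e4 using mono by linarith
qed

theorem hyper:
  fixes m :: nat and \<rho> :: real
  assumes m: "2 \<le> m" and r0: "0 \<le> \<rho>" and rt: "\<rho>^2 * sqrt (real m) \<le> 1/3"
  shows "real (m^n) * cg4 {..<m^n} (tpf m \<rho> n M) \<le> (cfr {..<m^n} M)^2"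
proof (induction n arbitrary: M)
  case 0
  have one: "{..<m^0} = {0::nat}" by auto
  have t0: "tpf m \<rho> 0 M = (\<lambda>c d. M 0 0)" unfolding tpf_def by (simp add: one)
  show ?case unfolding t0 one
    by (simp add: cg4_def cfr_def cmul_def cadj_def norm_mult power2_eq_square)
next
  case (Suc n)
  define k where "k = m^n"
  have m0: "0 < m" using m by simp
  have k0: "0 < k" unfolding k_def using m0 by simp
  have K: "m^Suc n = m * k" unfolding k_def by simp
  define A where "A = {..<m}"
  define S where "S = {..<k}"
  have fA: "finite A" and fS: "finite S" and cA: "card A = m" unfolding A_def S_def by auto
  define hm where "hm = (\<lambda>x :: nat \<times> nat. snd x + k * fst x)"
  have bij: "bij_betw hm (A \<times> S) {..<m^Suc n}"
    unfolding hm_def A_def S_def K by (rule bij_split[OF k0])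
  define Mb where "Mb = (\<lambda>a b x y. M (x + k * a) (y + k * b))"
  define Nb where "Nb = (\<lambda>a b. tpf m \<rho> n (Mb a b))"
  define M0 where "M0 = (\<lambda>x y. (1 / of_nat m) * (\<Sum>a\<in>A. Mb a a x y))"
  define C where "C = (\<lambda>c d. (1 / of_nat m) * (\<Sum>a\<in>A. Nb a a c d))"
  define Mp where "Mp = (\<lambda>a b x y. Mb a b x y - (if a = b then M0 x y else 0))"
  define Np where "Np = (\<lambda>a b c d. Nb a b c d - (if a = b then C c d else 0))"
  have C_eq: "C = tpf m \<rho> n M0"
    unfolding C_def M0_def Nb_def by (intro ext) (rule tpf_sum[symmetric])
  have Np_eq: "Np a b = tpf m \<rho> n (Mp a b)" for a b
  proof (intro ext)
    fix c d
    show "Np a b c d = tpf m \<rho> n (Mp a b) c d"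
    proof (cases "a = b")
      case True
      then show ?thesis unfolding Np_def Mp_def Nb_def tpf_diff C_eq by simp
    next
      case False
      then show ?thesis unfolding Np_def Mp_def Nb_def tpf_diff by (simp add: tpf_zero)
    qed
  qed
  define Z where "Z = tpf m \<rho> (Suc n) M"
  have Zeq: "Z (hm x) (hm y) = bd A S C x y + complex_of_real \<rho> * bk A S Np x y"
    if x: "x \<in> A \<times> S" and y: "y \<in> A \<times> S" for x y
  proof -
    obtain c1 c0 where xc: "x = (c1, c0)" by (cases x)
    obtain d1 d0 where yd: "y = (d1, d0)" by (cases y)
    have c1: "c1 < m" and c0: "c0 < m^n" and d1: "d1 < m" and d0: "d0 < m^n"
      using x y unfolding xc yd A_def S_def k_def by auto
    have "Z (hm x) (hm y) = (\<Sum>a1<m. \<Sum>b1<m. dco m \<rho> a1 b1 c1 d1 * Nb a1 b1 c0 d0)"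
      unfolding Z_def hm_def xc yd Nb_def Mb_def k_def using tpf_Suc[OF m0 c0 d0 c1 d1]
      by (simp add: mult.commute)
    also have "\<dots> = complex_of_real \<rho> * Nb c1 d1 c0 d0 +
        (if c1 = d1 then complex_of_real ((1 - \<rho>) / real m) * (\<Sum>a<m. Nb a a c0 d0) else 0)"
      by (rule dco_sum[OF c1 d1])
    also have "\<dots> = bd A S C x y + complex_of_real \<rho> * bk A S Np x y"
      using x y m0 unfolding xc yd bd_def bk_def Np_def C_def A_def
      by (auto simp: field_simps)
    finally show ?thesis .
  qed
  have cgZ: "cg4 {..<m^Suc n} Z = cg4 (A \<times> S) (\<lambda>x y. bd A S C x y + complex_of_real \<rho> * bk A S Np x y)"
  proof -
    have "cg4 {..<m^Suc n} Z = cg4 (A \<times> S) (\<lambda>x y. Z (hm x) (hm y))"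
      by (rule cg4_reindex[OF bij, symmetric])
    also have "\<dots> = cg4 (A \<times> S) (\<lambda>x y. bd A S C x y + complex_of_real \<rho> * bk A S Np x y)"
      by (rule cg4_cong) (rule Zeq)
    finally show ?thesis .
  qed
  have N0: "(\<Sum>a\<in>A. Np a a c d) = 0" for c d
  proof -
    have "(\<Sum>a\<in>A. Np a a c d) = (\<Sum>a\<in>A. Nb a a c d) - of_nat m * C c d"
      unfolding Np_def using cA by (simp add: sum_subtractf)
    also have "\<dots> = 0" unfolding C_def using m0 by simp
    finally show ?thesis .
  qed
  define g where "g = sqrt (cg4 S C)"
  define h where "h = (\<Sum>a\<in>A. \<Sum>b\<in>A. sqrt (cg4 S (Np a b)))"
  have bm: "cg4 (A \<times> S) (\<lambda>x y. bd A S C x y + complex_of_real \<rho> * bk A S Np x y)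
     \<le> real m * g^2 + 6 * \<rho>^2 * g * h + 4 * \<rho>^3 * sqrt (g * h) * h + \<rho>^4 * h^2"
    using block_main[where N=Np and C=C and r=\<rho>, OF fA fS N0 r0] unfolding g_def h_def cA .
  have sq: "sqrt (real k) * sqrt (cg4 S (tpf m \<rho> n X)) \<le> cfr S X" for X
  proof -
    have "sqrt (real k) * sqrt (cg4 S (tpf m \<rho> n X)) = sqrt (real k * cg4 S (tpf m \<rho> n X))"
      by (simp add: real_sqrt_mult)
    also have "\<dots> \<le> sqrt ((cfr S X)^2)"
      using Suc.IH[of X] unfolding S_def k_def by (rule real_sqrt_le_mono)
    also have "\<dots> = cfr S X" by simp
    finally show ?thesis .
  qed
  have gb: "sqrt (real k) * g \<le> cfr S M0" unfolding g_def C_eq by (rule sq)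
  have hb: "sqrt (real k) * h \<le> (\<Sum>a\<in>A. \<Sum>b\<in>A. cfr S (Mp a b))"
    unfolding h_def sum_distrib_left by (intro sum_mono) (unfold Np_eq, rule sq)
  have cfrM: "cfr {..<m^Suc n} M = real m * cfr S M0 + (\<Sum>a\<in>A. \<Sum>b\<in>A. cfr S (Mp a b))"
  proof -
    have "cfr {..<m^Suc n} M = cfr (A \<times> S) (\<lambda>x y. M (hm x) (hm y))"
      by (rule cfr_reindex[OF bij, symmetric])
    also have "\<dots> = cfr (A \<times> S) (bk A S Mb)"
      by (rule cfr_cong) (auto simp: bk_def Mb_def hm_def)
    also have "\<dots> = (\<Sum>a\<in>A. \<Sum>b\<in>A. cfr S (Mb a b))" by (rule cfr_bk)
    also have "\<dots> = real m * cfr S M0 + (\<Sum>a\<in>A. \<Sum>b\<in>A. cfr S (Mp a b))"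
      by (rule orth[OF fA cA m0 M0_def Mp_def])
    finally show ?thesis .
  qed
  have g0: "0 \<le> g" unfolding g_def by simp
  have h0: "0 \<le> h" unfolding h_def by (intro sum_nonneg) simp
  have "real (m^Suc n) * cg4 {..<m^Suc n} (tpf m \<rho> (Suc n) M)
      = real m * real k * cg4 (A \<times> S) (\<lambda>x y. bd A S C x y + complex_of_real \<rho> * bk A S Np x y)"
    using cgZ unfolding Z_def[symmetric] K by simp
  also have "\<dots> \<le> real m * real k * (real m * g^2 + 6 * \<rho>^2 * g * h + 4 * \<rho>^3 * sqrt (g * h) * h + \<rho>^4 * h^2)"
    by (rule mult_left_mono[OF bm]) simp
  also have "\<dots> \<le> (real m * cfr S M0 + (\<Sum>a\<in>A. \<Sum>b\<in>A. cfr S (Mp a b)))^2"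
    by (rule final_arith) (use m k0 r0 rt g0 h0 gb hb in auto)
  also have "\<dots> = (cfr {..<m^Suc n} M)^2" unfolding cfrM ..
  finally show ?case .
qed

lemma cfr_pos: assumes M: "M \<in> carrier_mat k k" and nz: "M \<noteq> 0\<^sub>m k k"
  shows "0 < cfr {..<k} (mf M)"
proof -
  obtain i j where ij: "i < k" "j < k" "M $$ (i,j) \<noteq> 0"
  proof -
    have "\<exists>i j. i < k \<and> j < k \<and> M $$ (i,j) \<noteq> 0"
    proof (rule ccontr)
      assume "\<not> ?thesis"
      then have "M = 0\<^sub>m k k" using M by (intro eq_matI) auto
      then show False using nz by simp
    qed
    then show ?thesis using that by blast
  qed
  have "0 < (cmod (mf M i j))^2" using ij by (simp add: mf_def)
  also have "\<dots> \<le> (\<Sum>j'<k. (cmod (mf M i j'))^2)"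
    by (rule member_le_sum) (use ij in auto)
  also have "\<dots> \<le> (\<Sum>i'<k. \<Sum>j'<k. (cmod (mf M i' j'))^2)"
    by (rule member_le_sum[where f = "\<lambda>i'. \<Sum>j'<k. (cmod (mf M i' j'))^2"]) (use ij in \<open>auto intro: sum_nonneg\<close>)
  finally show ?thesis unfolding cfr_def .
qed

theorem lemma8p2:
  fixes m n :: nat and \<rho> :: real
  assumes "m \<ge> 2" and "0 \<le> \<rho>" and "\<rho> \<le> sqrt (1 / (3 * sqrt (real m)))" and "n \<ge> 1"
  shows "op_norm_pq (m ^ n) 2 4 (tensor_pow_map m n (noise_op m \<rho>)) \<le> 1"
proof -
  note m = assms(1) and r0 = assms(2) and rle = assms(3)
  define k where "k = m^n"
  define L where "L = tensor_pow_map m n (noise_op m \<rho>)"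
  have m0: "0 < m" using m by simp
  have k0: "0 < k" unfolding k_def using m0 by simp
  have sm: "0 < sqrt (real m)" using m0 by simp
  have rt: "\<rho>^2 * sqrt (real m) \<le> 1/3"
  proof -
    have "\<rho>^2 \<le> (sqrt (1 / (3 * sqrt (real m))))^2" using rle r0 by (intro power_mono) auto
    also have "\<dots> = 1 / (3 * sqrt (real m))" using sm by simp
    finally have "\<rho>^2 \<le> 1 / (3 * sqrt (real m))" .
    then have "\<rho>^2 * sqrt (real m) \<le> 1 / (3 * sqrt (real m)) * sqrt (real m)"
      using sm by (intro mult_right_mono) auto
    also have "\<dots> = 1/3" using sm by simp
    finally show ?thesis .
  qed
  have bound: "norm_p' 4 (L M) / norm_p' 2 M \<le> 1" if M: "M \<in> carrier_mat k k" and nz: "M \<noteq> 0\<^sub>m k k" for M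
  proof -
    have LM: "L M \<in> carrier_mat k k" unfolding L_def k_def by (rule tpm_carrier)
    define F where "F = cfr {..<k} (mf M)"
    define G where "G = cg4 {..<k} (mf (L M))"
    have F0: "0 < F" unfolding F_def by (rule cfr_pos[OF M nz])
    have G0: "0 \<le> G" unfolding G_def by simp
    have GT: "G = cg4 {..<k} (tpf m \<rho> n (mf M))"
      unfolding G_def
    proof (rule cg4_cong)
      fix i j assume ij: "i \<in> {..<k}" "j \<in> {..<k}"
      show "mf (L M) i j = tpf m \<rho> n (mf M) i j"
        unfolding L_def using tpm_entry[OF m0, of i n j \<rho> M] ij
        by (simp add: k_def mf_def[of "tensor_pow_map m n (noise_op m \<rho>) M"])
    qed
    have hyp: "real k * G \<le> F^2" unfolding GT F_def k_def by (rule hyper[OF m r0 rt])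
    have n4: "norm_p' 4 (L M) = (G / real k) powr (1/4)"
      unfolding norm_p'_def G_def using sing_sums(2)[OF LM] LM by simp
    have n2: "norm_p' 2 M = (F / real k) powr (1/2)"
      unfolding norm_p'_def F_def using sing_sums(1)[OF M] M by simp
    have "G / real k = (real k * G) / (real k)^2" using k0 by (simp add: power2_eq_square)
    also have "\<dots> \<le> F^2 / (real k)^2" using hyp k0 by (intro divide_right_mono) auto
    also have "\<dots> = (F / real k)^2" by (simp add: power_divide)
    finally have a: "G / real k \<le> (F / real k)^2" .
    have Gk0: "0 \<le> G / real k" using G0 k0 by simp
    have Fk0: "0 \<le> F / real k" using F0 k0 by simp
    have "(G / real k) powr (1/4) \<le> ((F / real k)^2) powr (1/4)"
      by (rule powr_mono2) (use a Gk0 in auto)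
    also have "(F / real k)^2 = (F / real k) powr 2" by (subst powr_numeral) (use Fk0 in auto)
    also have "((F / real k) powr 2) powr (1/4) = (F / real k) powr (2 * (1/4))" by (rule powr_powr)
    also have "(2::real) * (1/4) = 1/2" by simp
    finally have le: "norm_p' 4 (L M) \<le> norm_p' 2 M" unfolding n4 n2 .
    have pos: "0 < norm_p' 2 M" unfolding n2 using F0 k0 by simp
    show ?thesis using le pos by simp
  qed
  have one_nz: "(1\<^sub>m k :: complex mat) \<noteq> 0\<^sub>m k k"
  proof
    assume eq: "(1\<^sub>m k :: complex mat) = 0\<^sub>m k k"
    have "(1\<^sub>m k :: complex mat) $$ (0,0) = 1" using k0 by (simp add: index_one_mat(1))
    moreover have "(0\<^sub>m k k :: complex mat) $$ (0,0) = 0" using k0 by (simp add: index_zero_mat(1))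
    ultimately show False using eq by simp
  qed
  have mem: "norm_p' 4 (L (1\<^sub>m k)) / norm_p' 2 (1\<^sub>m k) \<in>
      {norm_p' 4 (L M) / norm_p' 2 M | M. M \<in> carrier_mat k k \<and> M \<noteq> 0\<^sub>m k k}"
    by (rule CollectI, rule exI[of _ "1\<^sub>m k"]) (use one_nz in simp)
  have ne: "{norm_p' 4 (L M) / norm_p' 2 M | M. M \<in> carrier_mat k k \<and> M \<noteq> 0\<^sub>m k k} \<noteq> {}"
    using mem by (metis equals0D)
  have ub: "\<And>x. x \<in> {norm_p' 4 (L M) / norm_p' 2 M | M. M \<in> carrier_mat k k \<and> M \<noteq> 0\<^sub>m k k} \<Longrightarrow> x \<le> 1"
  proof -
    fix x assume "x \<in> {norm_p' 4 (L M) / norm_p' 2 M | M. M \<in> carrier_mat k k \<and> M \<noteq> 0\<^sub>m k k}"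
    then obtain M where x: "x = norm_p' 4 (L M) / norm_p' 2 M" and M: "M \<in> carrier_mat k k" and nz: "M \<noteq> 0\<^sub>m k k"
      by blast
    show "x \<le> 1" unfolding x by (rule bound[OF M nz])
  qed
  show ?thesis
    unfolding op_norm_pq_def k_def[symmetric] L_def[symmetric]
    by (rule cSup_least[OF ne ub])
qed

end
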